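(* Let $D$ be a strongly connected digraph with at least two vertices and let $T$ be a DFS tree of $D$ rooted at $r$. Let $x_1,\ldots,x_k$ be the out-neighbors of $r$ in $T$, and for each $i\in\{1,\ldots,k\}$ let $T_i$ be the subtree of $T$ consisting of $r$, the arc $(r,x_i)$ and all descendants of $x_i$ (so $T=\bigcup_i T_i$ and $V(T_i)\cap V(T_j)=\{r\}$ for $i\ne j$). For each $i$ let $G_{T_i}$ be the undirected graph with vertex set $V(T_i)$ in which $uv$ is an edge whenever $D$ has a backward arc between $u$ and $v$ (in either direction). Then $\chi_A(D)\le \max_{1\le i\le k}\chi(G_{T_i})$.
   Context: Digraphs are finite and loopless; paths and cycles are directed. $\chi$ is the usual chromatic number of an undirected graph; $\chi_A$ is the minimum number of colors in a vertex coloring of a digraph whose color classes all induce acyclic subdigraphs. A DFS tree $T$ of a strongly connected digraph $D$ rooted at $r$ is the spanning out-branching of $D$ produced by a depth-first search of $D$ started at $r$. A vertex $v$ is a descendant of $u$ if $T$ contains a directed $uv$-path. An arc $(u,v)$ of $D$ is a backward arc if $u$ is a descendant of $v$. *)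

theory Defs
  imports Main
begin

definition digraph :: "'a set \<Rightarrow> ('a \<times> 'a) set \<Rightarrow> bool" where
  "digraph V A \<longleftrightarrow> finite V \<and> A \<subseteq> V \<times> V \<and> (\<forall>v. (v, v) \<notin> A)"

definition strongly_connected :: "'a set \<Rightarrow> ('a \<times> 'a) set \<Rightarrow> bool" where
  "strongly_connected V A \<longleftrightarrow> (\<forall>u\<in>V. \<forall>v\<in>V. (u, v) \<in> A\<^sup>*)"

text \<open>Executions of a depth-first search of the digraph with arc set A started at r.
  State: stack (current path, top first), set of visited vertices, set of tree arcs.\<close>

inductive dfs_run :: "('a \<times> 'a) set \<Rightarrow> 'a \<Rightarrow> 'a list \<Rightarrow> 'a set \<Rightarrow> ('a \<times> 'a) set \<Rightarrow> bool"
  for A :: "('a \<times> 'a) set" and r :: 'a where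
  init: "dfs_run A r [r] {r} {}"
| advance: "dfs_run A r (u # s) vis T \<Longrightarrow> (u, v) \<in> A \<Longrightarrow> v \<notin> vis
            \<Longrightarrow> dfs_run A r (v # u # s) (insert v vis) (insert (u, v) T)"
| backtrack: "dfs_run A r (u # s) vis T \<Longrightarrow> (\<forall>v. (u, v) \<in> A \<longrightarrow> v \<in> vis)
            \<Longrightarrow> dfs_run A r s vis T"

text \<open>T (a set of arcs) is a DFS tree of D rooted at r: the tree produced by a
  completed depth-first search started at r.\<close>

definition dfs_tree :: "('a \<times> 'a) set \<Rightarrow> 'a \<Rightarrow> ('a \<times> 'a) set \<Rightarrow> bool" where
  "dfs_tree A r T \<longleftrightarrow> (\<exists>vis. dfs_run A r [] vis T)"

definition descendant :: "('a \<times> 'a) set \<Rightarrow> 'a \<Rightarrow> 'a \<Rightarrow> bool" where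
  "descendant T u v \<longleftrightarrow> (u, v) \<in> T\<^sup>*"

definition backward_arc :: "('a \<times> 'a) set \<Rightarrow> ('a \<times> 'a) set \<Rightarrow> 'a \<Rightarrow> 'a \<Rightarrow> bool" where
  "backward_arc A T u v \<longleftrightarrow> (u, v) \<in> A \<and> descendant T v u"

definition subtree_verts :: "('a \<times> 'a) set \<Rightarrow> 'a \<Rightarrow> 'a \<Rightarrow> 'a set" where
  "subtree_verts T r x = insert r {y. descendant T x y}"

definition chromatic_number :: "'a set \<Rightarrow> ('a \<Rightarrow> 'a \<Rightarrow> bool) \<Rightarrow> nat" where
  "chromatic_number W E = (LEAST k. \<exists>c :: 'a \<Rightarrow> nat.
      (\<forall>u\<in>W. c u < k) \<and> (\<forall>u\<in>W. \<forall>v\<in>W. E u v \<longrightarrow> c u \<noteq> c v))"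

definition back_graph :: "('a \<times> 'a) set \<Rightarrow> ('a \<times> 'a) set \<Rightarrow> 'a \<Rightarrow> 'a \<Rightarrow> bool" where
  "back_graph A T u v \<longleftrightarrow> backward_arc A T u v \<or> backward_arc A T v u"

definition dichromatic_number :: "'a set \<Rightarrow> ('a \<times> 'a) set \<Rightarrow> nat" where
  "dichromatic_number V A = (LEAST k. \<exists>c :: 'a \<Rightarrow> nat.
      (\<forall>v\<in>V. c v < k) \<and>
      (\<forall>i<k. acyclic (A \<inter> ({v\<in>V. c v = i} \<times> {v\<in>V. c v = i}))))"

end

theory Submission
  imports Defs
begin

fun chain :: "('a \<times> 'a) set \<Rightarrow> 'a list \<Rightarrow> bool" where
  "chain T [] = True"
| "chain T (u # s) = ((\<forall>w\<in>set s. (w, u) \<in> T\<^sup>*) \<and> chain T s)"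

lemma chain_mono: "chain T s \<Longrightarrow> T \<subseteq> T' \<Longrightarrow> chain T' s"
  by (induction s) (auto dest: rtrancl_mono[THEN subsetD])

definition inv :: "('a \<times> 'a) set \<Rightarrow> 'a \<Rightarrow> ('a \<times> 'a) set \<Rightarrow> 'a list \<Rightarrow> 'a set \<Rightarrow> bool" where
  "inv A r T s vis \<longleftrightarrow>
    r \<in> vis \<and> set s \<subseteq> vis \<and> T \<subseteq> A \<and> T \<subseteq> vis \<times> vis \<and> (\<forall>v\<in>vis. (r, v) \<in> T\<^sup>*) \<and>
    (\<forall>v\<in>vis. v = r \<or> (\<exists>u. (u, v) \<in> A)) \<and>
    (\<forall>a b a'. (a, b) \<in> T \<longrightarrow> (a', b) \<in> T \<longrightarrow> a = a') \<and> (\<forall>a. (a, r) \<notin> T) \<and>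
    chain T s \<and>
    (\<forall>z\<in>vis - set s. \<forall>y. (z, y) \<in> A \<longrightarrow> y \<in> vis) \<and>
    (\<forall>z\<in>vis - set s. \<forall>w\<in>set s. (z, w) \<in> A \<longrightarrow> (w, z) \<in> T\<^sup>*) \<and>
    (\<forall>S. (\<forall>a\<in>S. \<forall>b\<in>S. (a, b) \<in> A \<longrightarrow> (b, a) \<notin> T\<^sup>*) \<longrightarrow>
       acyclic (A \<inter> (((vis - set s) \<inter> S) \<times> ((vis - set s) \<inter> S))))"

lemma cycle_split:
  assumes "R' \<subseteq> R \<union> {p. fst p = u \<or> snd p = u}" "(x, y) \<in> R'\<^sup>+"
  shows "(x, y) \<in> R\<^sup>+ \<or> ((x, u) \<in> R'\<^sup>* \<and> (u, y) \<in> R'\<^sup>*)"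
  using assms(2)
proof induction
  case (base y)
  then show ?case using assms(1) by auto
next
  case (step y z)
  have yz: "(y, z) \<in> R \<or> y = u \<or> z = u" using step.hyps(2) assms(1) by auto
  from step.IH show ?case
  proof
    assume h: "(x, y) \<in> R\<^sup>+"
    show ?thesis using yz
    proof (elim disjE)
      assume "(y, z) \<in> R" then show ?thesis using h by (meson trancl.trancl_into_trancl)
    next
      assume "y = u" then show ?thesis using step.hyps by auto
    next
      assume "z = u" then show ?thesis using step.hyps
        by (meson r_into_rtrancl rtrancl.rtrancl_refl rtrancl_into_rtrancl trancl_into_rtrancl)
    qed
  next
    assume "(x, u) \<in> R'\<^sup>* \<and> (u, y) \<in> R'\<^sup>*"
    then show ?thesis using step.hyps(2) by (meson rtrancl.rtrancl_into_rtrancl)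
  qed
qed

lemma acyc_extend:
  assumes "R' \<subseteq> R \<union> {p. fst p = u \<or> snd p = u}" "acyclic R" "\<And>z. (z, u) \<in> R' \<Longrightarrow> False"
  shows "acyclic R'"
  unfolding acyclic_def
proof (intro allI notI)
  fix x assume c: "(x, x) \<in> R'\<^sup>+"
  from cycle_split[OF assms(1) c] assms(2) have h: "(x, u) \<in> R'\<^sup>* \<and> (u, x) \<in> R'\<^sup>*"
    unfolding acyclic_def by auto
  have "(u, u) \<in> R'\<^sup>+"
  proof (cases "x = u")
    case True then show ?thesis using c by simp
  next
    case False
    then have "(x, u) \<in> R'\<^sup>+" using h by (meson rtranclD)
    then show ?thesis using h by auto
  qed
  then obtain z where "(z, u) \<in> R'" by (meson tranclE)
  then show False using assms(3) by blast
qed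

lemma invD: assumes "inv A r T s vis"
  shows "r \<in> vis" "set s \<subseteq> vis" "T \<subseteq> A" "T \<subseteq> vis \<times> vis"
    "\<forall>v\<in>vis. (r, v) \<in> T\<^sup>*" "\<forall>v\<in>vis. v = r \<or> (\<exists>u. (u, v) \<in> A)"
    "\<forall>a b a'. (a, b) \<in> T \<longrightarrow> (a', b) \<in> T \<longrightarrow> a = a'" "\<forall>a. (a, r) \<notin> T"
    "chain T s"
    "\<forall>z\<in>vis - set s. \<forall>y. (z, y) \<in> A \<longrightarrow> y \<in> vis"
    "\<forall>z\<in>vis - set s. \<forall>w\<in>set s. (z, w) \<in> A \<longrightarrow> (w, z) \<in> T\<^sup>*"
    "\<forall>S. (\<forall>a\<in>S. \<forall>b\<in>S. (a, b) \<in> A \<longrightarrow> (b, a) \<notin> T\<^sup>*) \<longrightarrow>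
       acyclic (A \<inter> (((vis - set s) \<inter> S) \<times> ((vis - set s) \<inter> S)))"
  using assms unfolding inv_def apply - by (elim conjE; assumption)+

lemma acyc_empty: "acyclic {}" by (simp add: acyclic_def)

lemma inv_run:
  assumes loopless: "\<forall>v. (v, v) \<notin> A"
  shows "dfs_run A r s vis T \<Longrightarrow> inv A r T s vis"
proof (induction rule: dfs_run.induct)
  case init
  show ?case unfolding inv_def by (simp add: acyc_empty)
next
  case (advance u s vis T v)
  note ii = invD[OF advance.IH]
  note i1 = ii(1)
  note i2 = ii(2)
  note i3 = ii(3)
  note i4 = ii(4)
  note i5 = ii(5)
  note i6 = ii(6)
  note i7 = ii(7)
  note i8 = ii(8)
  note i9 = ii(9)
  note i10 = ii(10)
  note i11 = ii(11)
  note i12 = ii(12)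
  let ?T = "insert (u, v) T"
  have mono: "T\<^sup>* \<subseteq> ?T\<^sup>*" by (rule rtrancl_mono) auto
  have vnv: "v \<notin> vis" by (rule advance.hyps)
  have F: "insert v vis - set (v # u # s) = vis - set (u # s)" using vnv by auto
  have ch: "chain ?T (u # s)" using chain_mono[OF i9, of ?T] by blast
  have uv: "u \<in> vis" using i2 by simp
  have "(\<forall>w\<in>set (u # s). (w, v) \<in> ?T\<^sup>*)"
  proof
    fix w assume "w \<in> set (u # s)"
    then have "(w, u) \<in> ?T\<^sup>*" using ch by auto
    then show "(w, v) \<in> ?T\<^sup>*" by (meson insertI1 rtrancl.rtrancl_into_rtrancl)
  qed
  then have ch2: "chain ?T (v # u # s)" using ch by simp
  show ?case unfolding inv_def F
  proof (intro conjI)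
    show "\<forall>v'\<in>insert v vis. (r, v') \<in> ?T\<^sup>*"
    proof
      fix w assume "w \<in> insert v vis"
      then show "(r, w) \<in> ?T\<^sup>*"
      proof
        assume "w = v"
        have "(r, u) \<in> ?T\<^sup>*" using i5 uv mono by blast
        then show ?thesis using \<open>w = v\<close> by (meson insertI1 rtrancl.rtrancl_into_rtrancl)
      next
        assume "w \<in> vis" then show ?thesis using i5 mono by blast
      qed
    qed
    show "\<forall>a b a'. (a, b) \<in> ?T \<longrightarrow> (a', b) \<in> ?T \<longrightarrow> a = a'"
      using i7 i4 vnv by blast
    show "\<forall>a. (a, r) \<notin> ?T" using i8 i1 vnv by blast
    show "\<forall>z\<in>vis - set (u # s). \<forall>w\<in>set (v # u # s). (z, w) \<in> A \<longrightarrow> (w, z) \<in> ?T\<^sup>*"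
    proof (intro ballI impI)
      fix z w assume z: "z \<in> vis - set (u # s)" and w: "w \<in> set (v # u # s)" and zw: "(z, w) \<in> A"
      have "w \<noteq> v" using i10 z zw vnv by blast
      then have "w \<in> set (u # s)" using w by simp
      then have "(w, z) \<in> T\<^sup>*" using i11 z zw by blast
      then show "(w, z) \<in> ?T\<^sup>*" using mono by blast
    qed
    show "\<forall>S. (\<forall>a\<in>S. \<forall>b\<in>S. (a, b) \<in> A \<longrightarrow> (b, a) \<notin> ?T\<^sup>*) \<longrightarrow>
       acyclic (A \<inter> ((vis - set (u # s)) \<inter> S) \<times> ((vis - set (u # s)) \<inter> S))"
    proof (intro allI impI)
      fix S assume h: "\<forall>a\<in>S. \<forall>b\<in>S. (a, b) \<in> A \<longrightarrow> (b, a) \<notin> ?T\<^sup>*"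
      have "\<forall>a\<in>S. \<forall>b\<in>S. (a, b) \<in> A \<longrightarrow> (b, a) \<notin> T\<^sup>*"
      proof (intro ballI impI notI)
        fix a b assume "a \<in> S" "b \<in> S" "(a, b) \<in> A" "(b, a) \<in> T\<^sup>*"
        then show False using h mono by blast
      qed
      then show "acyclic (A \<inter> ((vis - set (u # s)) \<inter> S) \<times> ((vis - set (u # s)) \<inter> S))"
        by (rule mp[OF spec[OF i12, of S]])
    qed
    show "r \<in> insert v vis" using i1 by blast
    show "set (v # u # s) \<subseteq> insert v vis" using i2 by auto
    show "?T \<subseteq> A" using i3 advance.hyps by blast
    show "?T \<subseteq> insert v vis \<times> insert v vis" using i4 uv by blast
    show "\<forall>w\<in>insert v vis. w = r \<or> (\<exists>u. (u, w) \<in> A)" using i6 advance.hyps by blast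
    show "chain ?T (v # u # s)" by (rule ch2)
    show "\<forall>z\<in>vis - set (u # s). \<forall>y. (z, y) \<in> A \<longrightarrow> y \<in> insert v vis"
      using i10 by blast
  qed
next
  case (backtrack u s vis T)
  note ii = invD[OF backtrack.IH]
  note i1 = ii(1)
  note i2 = ii(2)
  note i3 = ii(3)
  note i4 = ii(4)
  note i5 = ii(5)
  note i6 = ii(6)
  note i7 = ii(7)
  note i8 = ii(8)
  note i9 = ii(9)
  note i10 = ii(10)
  note i11 = ii(11)
  note i12 = ii(12)
  have hb: "\<forall>v. (u, v) \<in> A \<longrightarrow> v \<in> vis" by (rule backtrack.hyps)
  have chs: "\<forall>w\<in>set s. (w, u) \<in> T\<^sup>*" and chs2: "chain T s" using i9 by simp_all
  show ?case unfolding inv_def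
  proof (intro conjI)
    show "\<forall>z\<in>vis - set s. \<forall>y. (z, y) \<in> A \<longrightarrow> y \<in> vis"
    proof (intro ballI allI impI)
      fix z y assume z: "z \<in> vis - set s" and zy: "(z, y) \<in> A"
      show "y \<in> vis"
      proof (cases "z = u")
        case True then show ?thesis using hb zy by blast
      next
        case False then have "z \<in> vis - set (u # s)" using z by simp
        then show ?thesis using i10 zy by blast
      qed
    qed
    show "\<forall>z\<in>vis - set s. \<forall>w\<in>set s. (z, w) \<in> A \<longrightarrow> (w, z) \<in> T\<^sup>*"
    proof (intro ballI impI)
      fix z w assume z: "z \<in> vis - set s" and w: "w \<in> set s" and zw: "(z, w) \<in> A"
      show "(w, z) \<in> T\<^sup>*"
      proof (cases "z = u")
        case True then show ?thesis using chs w by blast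
      next
        case False then have "z \<in> vis - set (u # s)" using z by simp
        moreover have "w \<in> set (u # s)" using w by simp
        ultimately show ?thesis using i11 zw by blast
      qed
    qed
    show "\<forall>S. (\<forall>a\<in>S. \<forall>b\<in>S. (a, b) \<in> A \<longrightarrow> (b, a) \<notin> T\<^sup>*) \<longrightarrow>
       acyclic (A \<inter> ((vis - set s) \<inter> S) \<times> ((vis - set s) \<inter> S))"
    proof (intro allI impI)
      fix S assume hS: "\<forall>a\<in>S. \<forall>b\<in>S. (a, b) \<in> A \<longrightarrow> (b, a) \<notin> T\<^sup>*"
      let ?R = "A \<inter> ((vis - set (u # s)) \<inter> S) \<times> ((vis - set (u # s)) \<inter> S)"
      let ?R' = "A \<inter> ((vis - set s) \<inter> S) \<times> ((vis - set s) \<inter> S)"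
      have ac: "acyclic ?R" using hS by (rule mp[OF spec[OF i12, of S]])
      have sub: "?R' \<subseteq> ?R \<union> {p. fst p = u \<or> snd p = u}" by auto
      show "acyclic ?R'"
      proof (rule acyc_extend[OF sub ac])
        fix z assume z: "(z, u) \<in> ?R'"
        then have "z \<noteq> u" using loopless by auto
        then have zF: "z \<in> vis - set (u # s)" using z by auto
        have zu: "(z, u) \<in> A" using z by blast
        have "(u, z) \<in> T\<^sup>*" using i11 zF zu by simp
        moreover have "z \<in> S" "u \<in> S" using z by auto
        ultimately show False using hS zu by blast
      qed
    qed
    show "r \<in> vis" by (rule i1)
    show "set s \<subseteq> vis" using i2 by simp
    show "T \<subseteq> A" by (rule i3)
    show "T \<subseteq> vis \<times> vis" by (rule i4)
    show "\<forall>v\<in>vis. (r, v) \<in> T\<^sup>*" by (rule i5)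
    show "\<forall>v\<in>vis. v = r \<or> (\<exists>u. (u, v) \<in> A)" by (rule i6)
    show "\<forall>a b a'. (a, b) \<in> T \<longrightarrow> (a', b) \<in> T \<longrightarrow> a = a'" by (rule i7)
    show "\<forall>a. (a, r) \<notin> T" by (rule i8)
    show "chain T s" by (rule chs2)
  qed
qed


lemma root_anc: "\<forall>a. (a, r) \<notin> T \<Longrightarrow> (a, r) \<in> T\<^sup>* \<Longrightarrow> a = r"
  by (erule rtranclE) auto

lemma anc_chain:
  assumes indeg: "\<forall>a b a'. (a, b) \<in> T \<longrightarrow> (a', b) \<in> T \<longrightarrow> a = a'"
  shows "(a, v) \<in> T\<^sup>* \<Longrightarrow> (b, v) \<in> T\<^sup>* \<Longrightarrow> (a, b) \<in> T\<^sup>* \<or> (b, a) \<in> T\<^sup>*"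
proof (induction arbitrary: b rule: rtrancl_induct)
  case base
  then show ?case by simp
next
  case (step y z)
  have "b = z \<or> (\<exists>y'. (b, y') \<in> T\<^sup>* \<and> (y', z) \<in> T)"
    using step.prems by (meson rtranclE)
  then show ?case
  proof
    assume "b = z"
    then show ?thesis using step.hyps by (meson rtrancl.rtrancl_into_rtrancl)
  next
    assume "\<exists>y'. (b, y') \<in> T\<^sup>* \<and> (y', z) \<in> T"
    then obtain y' where y': "(b, y') \<in> T\<^sup>*" "(y', z) \<in> T" by blast
    then have "y' = y" using indeg step.hyps(2) by blast
    then show ?thesis using step.IH y' by blast
  qed
qed

lemma child_unique:
  assumes indeg: "\<forall>a b a'. (a, b) \<in> T \<longrightarrow> (a', b) \<in> T \<longrightarrow> a = a'"
    and noroot: "\<forall>a. (a, r) \<notin> T"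
    and "(r, x) \<in> T" "(r, x') \<in> T" "(x, x') \<in> T\<^sup>*"
  shows "x = x'"
proof -
  have "x = x' \<or> (\<exists>y. (x, y) \<in> T\<^sup>* \<and> (y, x') \<in> T)"
    using assms(5) by (meson rtranclE)
  then show ?thesis
  proof
    assume "\<exists>y. (x, y) \<in> T\<^sup>* \<and> (y, x') \<in> T"
    then obtain y where y: "(x, y) \<in> T\<^sup>*" "(y, x') \<in> T" by blast
    then have "y = r" using indeg assms(4) by blast
    then have "x = r" using root_anc[OF noroot] y by blast
    then show ?thesis using assms(3) noroot by blast
  qed
qed

lemma chrom_ex:
  assumes "finite W" "\<forall>u. \<not> E u u"
  shows "\<exists>c. (\<forall>u\<in>W. c u < chromatic_number W E) \<and> (\<forall>u\<in>W. \<forall>v\<in>W. E u v \<longrightarrow> c u \<noteq> c v)"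
proof -
  obtain h where h: "bij_betw h W {0..<card W}" using ex_bij_betw_finite_nat[OF assms(1)] by blast
  have "\<exists>c::'a \<Rightarrow> nat. (\<forall>u\<in>W. c u < card W) \<and> (\<forall>u\<in>W. \<forall>v\<in>W. E u v \<longrightarrow> c u \<noteq> c v)"
  proof (rule exI[of _ h], intro conjI ballI impI)
    fix u assume "u \<in> W" then show "h u < card W" using h unfolding bij_betw_def by auto
  next
    fix u v assume "u \<in> W" "v \<in> W" "E u v"
    then show "h u \<noteq> h v" using h assms(2) unfolding bij_betw_def inj_on_def by metis
  qed
  then have "\<exists>k. \<exists>c::'a \<Rightarrow> nat. (\<forall>u\<in>W. c u < k) \<and> (\<forall>u\<in>W. \<forall>v\<in>W. E u v \<longrightarrow> c u \<noteq> c v)"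
    by blast
  then show ?thesis unfolding chromatic_number_def by (rule LeastI_ex)
qed

lemma chrom_ex0:
  assumes "finite W" "\<forall>u. \<not> E u u" "r \<in> W"
  shows "\<exists>c. (\<forall>u\<in>W. c u < chromatic_number W E) \<and> (\<forall>u\<in>W. \<forall>v\<in>W. E u v \<longrightarrow> c u \<noteq> c v) \<and> c r = 0"
proof -
  obtain c where c: "\<forall>u\<in>W. c u < chromatic_number W E" "\<forall>u\<in>W. \<forall>v\<in>W. E u v \<longrightarrow> c u \<noteq> c v"
    using chrom_ex[of W E, OF assms(1,2)] by blast
  define c' where "c' v = (if c v = c r then 0 else if c v = 0 then c r else c v)" for v
  have "\<forall>u\<in>W. c' u < chromatic_number W E"
    using c(1) assms(3) unfolding c'_def by auto
  moreover have inj: "\<And>x y. c x \<noteq> c y \<Longrightarrow> c' x \<noteq> c' y"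
    unfolding c'_def by auto
  moreover have "\<forall>u\<in>W. \<forall>v\<in>W. E u v \<longrightarrow> c' u \<noteq> c' v"
    using c(2) inj by blast
  moreover have "c' r = 0" unfolding c'_def by simp
  ultimately show ?thesis by blast
qed

theorem mainTheorem6:
  fixes V :: "'a set" and A :: "('a \<times> 'a) set" and T :: "('a \<times> 'a) set" and r :: 'a
  assumes "digraph V A"
    and "strongly_connected V A"
    and "card V \<ge> 2"
    and "r \<in> V"
    and "dfs_tree A r T"
  shows "dichromatic_number V A
    \<le> Max ((\<lambda>x. chromatic_number (subtree_verts T r x) (back_graph A T)) ` {x. (r, x) \<in> T})"
proof -
  have fin: "finite V" and AV: "A \<subseteq> V \<times> V" and loop: "\<forall>v. (v, v) \<notin> A"
    using assms(1) unfolding digraph_def by blast+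
  obtain vis where run: "dfs_run A r [] vis T" using assms(5) unfolding dfs_tree_def by blast
  note ii = invD[OF inv_run[OF loop run]]
  have rvis: "r \<in> vis" by (rule ii(1))
  have Tvis: "T \<subseteq> vis \<times> vis" by (rule ii(4))
  have reach: "\<forall>v\<in>vis. (r, v) \<in> T\<^sup>*" by (rule ii(5))
  have indeg: "\<forall>a b a'. (a, b) \<in> T \<longrightarrow> (a', b) \<in> T \<longrightarrow> a = a'" by (rule ii(7))
  have noroot: "\<forall>a. (a, r) \<notin> T" by (rule ii(8))
  have closed: "\<forall>z\<in>vis. \<forall>y. (z, y) \<in> A \<longrightarrow> y \<in> vis" using ii(10) by simp
  have visV: "vis \<subseteq> V"
  proof
    fix v assume "v \<in> vis"
    then have "v = r \<or> (\<exists>u. (u, v) \<in> A)" using ii(6) by blast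
    then show "v \<in> V" using AV assms(4) by blast
  qed
  have Vvis: "V \<subseteq> vis"
  proof
    fix v assume "v \<in> V"
    then have "(r, v) \<in> A\<^sup>*" using assms(2,4) unfolding strongly_connected_def by blast
    then show "v \<in> vis"
    proof (induction rule: rtrancl_induct)
      case base then show ?case by (rule rvis)
    next
      case (step y z) then show ?case using closed by blast
    qed
  qed
  define C where "C = {x. (r, x) \<in> T}"
  define chi where "chi = (\<lambda>x. chromatic_number (subtree_verts T r x) (back_graph A T))"
  define M where "M = Max (chi ` C)"
  have CV: "C \<subseteq> V" using Tvis visV unfolding C_def by blast
  have finC: "finite C" using finite_subset[OF CV fin] .
  have Mge: "\<And>x. x \<in> C \<Longrightarrow> chi x \<le> M" unfolding M_def using finC by simp
  have WV: "subtree_verts T r x \<subseteq> V" if "x \<in> C" for x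
  proof -
    have "{y. (x, y) \<in> T\<^sup>*} \<subseteq> vis"
    proof
      fix y assume "y \<in> {y. (x, y) \<in> T\<^sup>*}"
      then have "(x, y) \<in> T\<^sup>*" by simp
      then have "y = x \<or> (x, y) \<in> T\<^sup>+" by (auto simp add: rtrancl_eq_or_trancl)
      then have "y = x \<or> (\<exists>y'. (y', y) \<in> T)" by (blast dest: tranclD2)
      moreover have "(r, x) \<in> T" using that unfolding C_def by simp
      ultimately show "y \<in> vis" using Tvis by blast
    qed
    then have "{y. (x, y) \<in> T\<^sup>*} \<subseteq> V" using visV by (rule subset_trans)
    then show ?thesis unfolding subtree_verts_def descendant_def using assms(4) by simp
  qed
  have irr: "\<forall>u. \<not> back_graph A T u u" using loop unfolding back_graph_def backward_arc_def by simp
  have colex: "\<exists>c. (\<forall>u\<in>subtree_verts T r x. c u < chi x) \<and>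
      (\<forall>u\<in>subtree_verts T r x. \<forall>v\<in>subtree_verts T r x. back_graph A T u v \<longrightarrow> c u \<noteq> c v) \<and> c r = 0"
    if "x \<in> C" for x
    unfolding chi_def
    by (rule chrom_ex0[of _ "back_graph A T", OF finite_subset[OF WV[OF that] fin] irr]) (simp add: subtree_verts_def)
  define col where "col x = (SOME c. (\<forall>u\<in>subtree_verts T r x. c u < chi x) \<and>
      (\<forall>u\<in>subtree_verts T r x. \<forall>v\<in>subtree_verts T r x. back_graph A T u v \<longrightarrow> c u \<noteq> c v) \<and> c r = 0)" for x
  have col: "(\<forall>u\<in>subtree_verts T r x. col x u < chi x) \<and>
      (\<forall>u\<in>subtree_verts T r x. \<forall>v\<in>subtree_verts T r x. back_graph A T u v \<longrightarrow> col x u \<noteq> col x v) \<and> col x r = 0"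
    if "x \<in> C" for x
    unfolding col_def by (rule someI_ex[OF colex[OF that]])
  have col1: "col x u < chi x" if "x \<in> C" "u \<in> subtree_verts T r x" for x u
    using col[OF that(1)] that(2) by blast
  have col2: "col x u \<noteq> col x v" if "x \<in> C" "u \<in> subtree_verts T r x" "v \<in> subtree_verts T r x"
    "back_graph A T u v" for x u v
  proof -
    have "\<forall>u\<in>subtree_verts T r x. \<forall>v\<in>subtree_verts T r x. back_graph A T u v \<longrightarrow> col x u \<noteq> col x v"
      using col[OF that(1)] by blast
    then show ?thesis using that(2-4) by blast
  qed
  have col3: "col x r = 0" if "x \<in> C" for x using col[OF that] by blast
  define par where "par v = (THE x. (r, x) \<in> T \<and> (x, v) \<in> T\<^sup>*)" for v
  have ex1: "\<exists>!x. (r, x) \<in> T \<and> (x, v) \<in> T\<^sup>*" if "v \<in> V" "v \<noteq> r" for v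
  proof -
    have "(r, v) \<in> T\<^sup>*" using reach Vvis that(1) by blast
    then have "(r, v) \<in> T\<^sup>+" using that(2) by (simp add: rtrancl_eq_or_trancl)
    then obtain x where x: "(r, x) \<in> T" "(x, v) \<in> T\<^sup>*" by (blast dest: tranclD)
    have "x' = x" if "(r, x') \<in> T" "(x', v) \<in> T\<^sup>*" for x'
    proof -
      have "(x, x') \<in> T\<^sup>* \<or> (x', x) \<in> T\<^sup>*" using anc_chain[OF indeg x(2) that(2)] .
      then show ?thesis using child_unique[OF indeg noroot x(1) that(1)] child_unique[OF indeg noroot that(1) x(1)] by blast
    qed
    then show ?thesis using x by blast
  qed
  have par: "(r, par v) \<in> T \<and> (par v, v) \<in> T\<^sup>*" if "v \<in> V" "v \<noteq> r" for v
    unfolding par_def by (rule theI'[OF ex1[OF that]])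
  have par_uniq: "x = par v" if "v \<in> V" "v \<noteq> r" "(r, x) \<in> T" "(x, v) \<in> T\<^sup>*" for v x
    using ex1[OF that(1,2)] par[OF that(1,2)] that(3,4) by blast
  define c where "c v = (if v = r then 0 else col (par v) v)" for v
  have inW: "v \<in> subtree_verts T r (par v)" if "v \<in> V" "v \<noteq> r" for v
    using par[OF that] unfolding subtree_verts_def descendant_def by blast
  have rW: "r \<in> subtree_verts T r x" for x unfolding subtree_verts_def by blast
  have parC: "par v \<in> C" if "v \<in> V" "v \<noteq> r" for v using par[OF that] unfolding C_def by blast
  obtain v0 where v0: "v0 \<in> V" "v0 \<noteq> r"
  proof -
    have "\<not> V \<subseteq> {r}"
    proof
      assume "V \<subseteq> {r}"
      then have "card V \<le> card {r}" by (rule card_mono[rotated]) simp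
      then show False using assms(3) by simp
    qed
    then show ?thesis using that by blast
  qed
  have Mpos: "0 < M"
  proof -
    have "col (par v0) r < chi (par v0)" by (rule col1[OF parC[OF v0] rW])
    then show ?thesis using Mge[OF parC[OF v0]] by linarith
  qed
  have cbound: "\<forall>v\<in>V. c v < M"
  proof
    fix v assume v: "v \<in> V"
    show "c v < M"
    proof (cases "v = r")
      case True then show ?thesis using Mpos unfolding c_def by simp
    next
      case False
      have "col (par v) v < chi (par v)" by (rule col1[OF parC[OF v False] inW[OF v False]])
      then show ?thesis using Mge[OF parC[OF v False]] False unfolding c_def by simp
    qed
  qed
  have key: "c a \<noteq> c b" if ab: "a \<in> V" "b \<in> V" "(a, b) \<in> A" "(b, a) \<in> T\<^sup>*" for a b
  proof -
    have anb: "a \<noteq> b" using loop ab(3) by blast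
    show ?thesis
    proof (cases "b = r")
      case True
      then have ar: "a \<noteq> r" using anb by simp
      let ?p = "par a"
      have bg: "back_graph A T a r" using ab True
        unfolding back_graph_def backward_arc_def descendant_def by blast
      have "col ?p a \<noteq> col ?p r" by (rule col2[OF parC[OF ab(1) ar] inW[OF ab(1) ar] rW bg])
      then show ?thesis using col3[OF parC[OF ab(1) ar]] ar True unfolding c_def by simp
    next
      case False
      have ar: "a \<noteq> r"
      proof
        assume "a = r"
        then have "b = r" using root_anc[OF noroot] ab(4) by blast
        then show False using False by simp
      qed
      let ?p = "par b"
      have pb: "(r, ?p) \<in> T" "(?p, b) \<in> T\<^sup>*" using par[OF ab(2) False] by blast+
      have "(?p, a) \<in> T\<^sup>*" using pb(2) ab(4) by (rule rtrancl_trans)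
      then have pa: "par a = ?p" using par_uniq[OF ab(1) ar pb(1)] by simp
      have bg: "back_graph A T a b" using ab
        unfolding back_graph_def backward_arc_def descendant_def by blast
      have "col ?p a \<noteq> col ?p b"
        using col2[OF parC[OF ab(2) False] _ inW[OF ab(2) False] bg] inW[OF ab(1) ar] pa by simp
      then show ?thesis using ar False pa unfolding c_def by simp
    qed
  qed
  have acyc: "\<forall>i<M. acyclic (A \<inter> ({v\<in>V. c v = i} \<times> {v\<in>V. c v = i}))"
  proof (intro allI impI)
    fix i assume "i < M"
    let ?S = "{v\<in>V. c v = i}"
    have hS: "\<forall>a\<in>?S. \<forall>b\<in>?S. (a, b) \<in> A \<longrightarrow> (b, a) \<notin> T\<^sup>*" using key by blast
    have "acyclic (A \<inter> (((vis - set []) \<inter> ?S) \<times> ((vis - set []) \<inter> ?S)))"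
      using hS by (rule mp[OF spec[OF ii(12), of ?S]])
    moreover have "(vis - set []) \<inter> ?S = ?S" using Vvis by auto
    ultimately show "acyclic (A \<inter> (?S \<times> ?S))" by simp
  qed
  have "dichromatic_number V A \<le> M"
    unfolding dichromatic_number_def
    by (rule Least_le) (use cbound acyc in blast)
  then show ?thesis unfolding M_def chi_def C_def .
qed

end
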